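(* There exist constants $0<a_n\le A_n$ depending only on $n$ such that the following holds. Let $\alpha\in(0,1)$, $0<\epsilon<\min(\alpha,1-\alpha)$, $Q=[0,1]^n$, and let $\Lambda\subset\mathbb{R}^n$ be a convex set with $Q\subseteq\Lambda\subseteq n^{3/2}Q$. Let $E\subset\mathbb{R}^n$ be a measurable set of finite measure with $\frac{1}{|\Lambda|}\int_\Lambda\chi_E=\alpha$. Then there exists a cube $R\subseteq\Lambda$ with sides parallel to the axes and $a_n\epsilon^n\le|R|\le A_n\epsilon^n$ such that \[ \frac{\alpha-\epsilon}{1-\epsilon}\le\frac{1}{|R|}\int_R\chi_E\le\frac{\alpha}{1-\epsilon}. \]
   Context: $cQ$ denotes the dilate of $Q$ by factor $c$ about its center. *)

theory Defs
  imports "HOL-Analysis.Analysis"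
begin

definition dilate :: "real \<Rightarrow> 'a::real_vector \<Rightarrow> 'a set \<Rightarrow> 'a set" where
  "dilate c x0 S = (\<lambda>x. x0 + c *\<^sub>R (x - x0)) ` S"

definition unit_cube :: "'a::euclidean_space set" where
  "unit_cube = cbox 0 One"

definition unit_cube_center :: "'a::euclidean_space" where
  "unit_cube_center = (1/2) *\<^sub>R One"

definition axis_cube :: "'a::euclidean_space set \<Rightarrow> bool" where
  "axis_cube R \<longleftrightarrow> (\<exists>x s. s > 0 \<and> R = cbox x (x + s *\<^sub>R One))"

end

theory Submission imports Defs begin

definition cube :: "real \<Rightarrow> 'a::euclidean_space \<Rightarrow> 'a set" where
  "cube d x = cbox x (x + d *\<^sub>R One)"

lemma cube_measure:
  assumes "d \<ge> 0" shows "measure lebesgue (cube d (x::'a::euclidean_space)) = d ^ DIM('a)"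
  using assms by (simp add: cube_def measure_lborel_cbox_eq inner_simps)

lemma cube_int_measure:
  fixes x y :: "'a::euclidean_space"
  assumes "d \<ge> 0"
  shows "measure lebesgue (cube d x \<inter> cube d y) = (\<Prod>i\<in>Basis. max 0 (d - \<bar>x\<bullet>i - y\<bullet>i\<bar>))"
proof -
  have eq: "cube d x \<inter> cube d y = cbox (\<Sum>i\<in>Basis. max (x\<bullet>i) (y\<bullet>i) *\<^sub>R i) (\<Sum>i\<in>Basis. min ((x + d *\<^sub>R One)\<bullet>i) ((y + d *\<^sub>R One)\<bullet>i) *\<^sub>R i)"
    unfolding cube_def by (rule Int_interval)
  show ?thesis
  proof (cases "\<forall>i\<in>Basis. \<bar>x\<bullet>i - y\<bullet>i\<bar> \<le> d")
    case True
    then show ?thesis unfolding eq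
      by (auto simp: measure_lborel_cbox_eq inner_simps intro!: prod.cong)
  next
    case False
    then obtain j where j: "j \<in> Basis" "\<bar>x\<bullet>j - y\<bullet>j\<bar> > d" by force
    then have "(\<Prod>i\<in>Basis. max 0 (d - \<bar>x\<bullet>i - y\<bullet>i\<bar>)) = 0"
      by (intro prod_zero) (auto intro!: bexI[of _ j])
    moreover have "\<not> (\<forall>i\<in>Basis. (\<Sum>i\<in>Basis. max (x\<bullet>i) (y\<bullet>i) *\<^sub>R i) \<bullet> i \<le> (\<Sum>i\<in>Basis. min ((x + d *\<^sub>R One)\<bullet>i) ((y + d *\<^sub>R One)\<bullet>i) *\<^sub>R i) \<bullet> i)"
      using j by (auto simp: inner_simps intro!: bexI[of _ j])
    ultimately show ?thesis unfolding eq
      by (simp only: measure_completion sets_lborel measure_lborel_cbox_eq borel_closed closed_cbox if_False)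
  qed
qed

lemma cube_diff_bound:
  fixes x y :: "'a::euclidean_space"
  assumes "d \<ge> 0" "E \<in> sets lebesgue"
  shows "measure lebesgue (cube d x \<inter> E) - measure lebesgue (cube d y \<inter> E)
     \<le> d ^ DIM('a) - (\<Prod>i\<in>Basis. max 0 (d - \<bar>x\<bullet>i - y\<bullet>i\<bar>))"
proof -
  have fm: "cube d z \<in> fmeasurable lebesgue" for z :: 'a unfolding cube_def by (rule lmeasurable_cbox)
  have m: "cube d z \<in> sets lebesgue" for z :: 'a using fm[of z] by (rule fmeasurableD)
  have f: "emeasure lebesgue (cube d z) \<noteq> \<infinity>" for z :: 'a
    using fmeasurableD2[OF fm[of z]] by simp
  let ?D = "cube d x - (cube d x \<inter> cube d y)"
  have mD: "?D \<in> sets lebesgue" using m by (intro sets.Diff sets.Int) 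
  have mE: "cube d y \<inter> E \<in> sets lebesgue" using m assms(2) by (intro sets.Int) 
  have sub: "cube d x \<inter> E \<subseteq> (cube d y \<inter> E) \<union> ?D" by blast
  have fU: "(cube d y \<inter> E) \<union> ?D \<in> fmeasurable lebesgue"
  proof (rule fmeasurableI2[of "cube d y \<union> cube d x"])
    show "cube d y \<union> cube d x \<in> fmeasurable lebesgue" using fm by (intro fmeasurable.Un)
    show "cube d y \<inter> E \<union> ?D \<subseteq> cube d y \<union> cube d x" by blast
    show "cube d y \<inter> E \<union> ?D \<in> sets lebesgue" using mD mE by (intro sets.Un)
  qed
  have "measure lebesgue (cube d x \<inter> E) \<le> measure lebesgue ((cube d y \<inter> E) \<union> ?D)"
    using sub fU m assms(2) by (intro measure_mono_fmeasurable) (auto intro: sets.Int)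
  also have "\<dots> \<le> measure lebesgue (cube d y \<inter> E) + measure lebesgue ?D"
    using measure_Un_le[OF mE mD] .
  also have "measure lebesgue ?D = measure lebesgue (cube d x) - measure lebesgue (cube d x \<inter> cube d y)"
    using f m by (intro measure_Diff) (auto intro: sets.Int)
  also have "\<dots> = d ^ DIM('a) - (\<Prod>i\<in>Basis. max 0 (d - \<bar>x\<bullet>i - y\<bullet>i\<bar>))"
    using assms(1) by (simp only: cube_measure cube_int_measure)
  finally show ?thesis by simp
qed

lemma cube_cont:
  fixes E :: "'a::euclidean_space set"
  assumes "d \<ge> 0" "E \<in> sets lebesgue"
  shows "continuous_on UNIV (\<lambda>x. measure lebesgue (cube d x \<inter> E))"
proof -
  let ?g = "\<lambda>x y::'a. d ^ DIM('a) - (\<Prod>i\<in>Basis. max 0 (d - \<bar>x\<bullet>i - y\<bullet>i\<bar>))"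
  have sym: "?g x y = ?g y x" for x y by (simp add: abs_minus_commute)
  show ?thesis unfolding continuous_on_def
  proof (intro ballI)
    fix x :: 'a
    have g0: "(?g x \<longlongrightarrow> ?g x x) (at x within UNIV)"
      by (intro tendsto_intros continuous_on_tendsto_compose) (auto intro!: continuous_intros)
    have "?g x x = 0" using assms by (simp add: prod_constant)
    with g0 have g: "(?g x \<longlongrightarrow> 0) (at x within UNIV)" by simp
    have "((\<lambda>y. measure lebesgue (cube d y \<inter> E) - measure lebesgue (cube d x \<inter> E)) \<longlongrightarrow> 0) (at x within UNIV)"
    proof (rule Lim_null_comparison[OF _ g], intro always_eventually allI)
      fix y
      show "norm (measure lebesgue (cube d y \<inter> E) - measure lebesgue (cube d x \<inter> E)) \<le> ?g x y"
        using cube_diff_bound[OF assms, of y x] cube_diff_bound[OF assms, of x y] sym[of x y]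
        by (simp add: abs_le_iff)
    qed
    then show "((\<lambda>x. measure lebesgue (cube d x \<inter> E)) \<longlongrightarrow> measure lebesgue (cube d x \<inter> E)) (at x within UNIV)"
      by (simp add: LIM_zero_iff)
  qed
qed


lemma fub:
  fixes F T0 L :: "'a::euclidean_space set"
  assumes F: "F \<in> sets borel" and T0: "T0 \<in> sets borel" and L: "L \<in> sets borel" and d: "d \<ge> 0"
  and sub: "\<And>x. x \<in> T0 \<Longrightarrow> cube d x \<subseteq> L"
  shows "(\<integral>\<^sup>+x. indicator T0 x * emeasure lborel (cube d x \<inter> F) \<partial>lborel)
     \<le> ennreal (d ^ DIM('a)) * emeasure lborel (L \<inter> F)"
proof -
  define S where "S = {p::'a\<times>'a. \<forall>i\<in>Basis. fst p \<bullet> i \<le> snd p \<bullet> i \<and> snd p \<bullet> i \<le> fst p \<bullet> i + d}"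
  have "closed S" unfolding S_def Ball_def
    by (intro closed_Collect_all closed_Collect_imp closed_Collect_conj closed_Collect_le open_Collect_const continuous_intros)
  then have Sb: "S \<in> sets (lborel \<Otimes>\<^sub>M lborel)" by (subst lborel_prod) (simp add: borel_closed)
  have Pb: "T0 \<times> F \<in> sets (lborel \<Otimes>\<^sub>M lborel)" using T0 F by (intro pair_measureI) auto
  have meas: "(\<lambda>(x,y). indicator (T0 \<times> F \<inter> S) (x,y) :: ennreal) \<in> borel_measurable (lborel \<Otimes>\<^sub>M lborel)"
    using Sb Pb by (simp add: sets.Int)
  have ind: "indicator (T0 \<times> F \<inter> S) (x,y) = indicator T0 x * (indicator (cube d x \<inter> F) y :: ennreal)" for x y
    by (auto simp: indicator_def S_def cube_def mem_box inner_simps)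
  have cb: "cube d x \<inter> F \<in> sets lborel" for x using F unfolding cube_def by auto
  have "(\<integral>\<^sup>+x. indicator T0 x * emeasure lborel (cube d x \<inter> F) \<partial>lborel)
      = (\<integral>\<^sup>+x. (\<integral>\<^sup>+y. indicator (T0 \<times> F \<inter> S) (x,y) \<partial>lborel) \<partial>lborel)"
    unfolding ind by (intro nn_integral_cong, subst nn_integral_cmult_indicator[OF cb]) (auto simp: mult.commute)
  also have "\<dots> = (\<integral>\<^sup>+y. (\<integral>\<^sup>+x. indicator (T0 \<times> F \<inter> S) (x,y) \<partial>lborel) \<partial>lborel)"
    using lborel_pair.Fubini'[OF meas] by simp
  also have "\<dots> \<le> (\<integral>\<^sup>+y. ennreal (d ^ DIM('a)) * indicator (L \<inter> F) y \<partial>lborel)"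
  proof (intro nn_integral_mono)
    fix y :: 'a
    have "(\<integral>\<^sup>+x. indicator (T0 \<times> F \<inter> S) (x,y) \<partial>lborel)
       \<le> (\<integral>\<^sup>+x. indicator (L \<inter> F) y * indicator (cbox (y - d *\<^sub>R One) y) x \<partial>lborel)"
    proof (intro nn_integral_mono)
      fix x
      show "indicator (T0 \<times> F \<inter> S) (x,y) \<le> (indicator (L \<inter> F) y * indicator (cbox (y - d *\<^sub>R One) y) x :: ennreal)"
      proof (cases "(x,y) \<in> T0 \<times> F \<inter> S")
        case True
        then have "y \<in> cube d x" "x \<in> T0" "y \<in> F"
          by (auto simp: S_def cube_def mem_box inner_simps)
        with sub have "y \<in> L \<inter> F" by auto
        moreover have "x \<in> cbox (y - d *\<^sub>R One) y" using True
          by (auto simp: S_def mem_box inner_simps)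
        ultimately show ?thesis by (simp add: indicator_def)
      qed simp
    qed
    also have "\<dots> = indicator (L \<inter> F) y * emeasure lborel (cbox (y - d *\<^sub>R One) y)"
      by (subst nn_integral_cmult_indicator) auto
    also have "emeasure lborel (cbox (y - d *\<^sub>R One) y) = ennreal (d ^ DIM('a))"
      using d by (simp add: emeasure_lborel_cbox_eq inner_simps prod_constant)
    finally show "(\<integral>\<^sup>+x. indicator (T0 \<times> F \<inter> S) (x,y) \<partial>lborel) \<le> ennreal (d ^ DIM('a)) * indicator (L \<inter> F) y"
      by (simp add: mult.commute)
  qed
  also have "\<dots> = ennreal (d ^ DIM('a)) * emeasure lborel (L \<inter> F)"
    using L F by (intro nn_integral_cmult_indicator) auto
  finally show ?thesis .
qed


lemma borel_inner:
  fixes A :: "'a::euclidean_space set"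
  assumes "A \<in> sets lebesgue"
  obtains S where "S \<in> sets borel" "S \<subseteq> A" "A - S \<in> null_sets lebesgue"
proof -
  obtain S N N' where *: "A = S \<union> N" "N \<subseteq> N'" "N' \<in> null_sets lborel" "S \<in> sets lborel"
    using sets_completionE[OF assms] by metis
  have "A - S \<in> null_sets lebesgue"
    using * by (intro null_sets_completion_subset[OF _ null_sets_completionI[OF *(3)]]) auto
  with * show ?thesis using that by auto
qed

lemma borel_outer:
  fixes A :: "'a::euclidean_space set"
  assumes "A \<in> sets lebesgue"
  obtains L where "L \<in> sets borel" "A \<subseteq> L" "L - A \<in> null_sets lebesgue"
proof -
  obtain S N N' where *: "A = S \<union> N" "N \<subseteq> N'" "N' \<in> null_sets lborel" "S \<in> sets lborel"
    using sets_completionE[OF assms] by metis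
  have "(S \<union> N') - A \<in> null_sets lebesgue"
    using * by (intro null_sets_completion_subset[OF _ null_sets_completionI[OF *(3)]]) auto
  moreover have "S \<union> N' \<in> sets borel" using * by auto
  ultimately show ?thesis using that * by auto
qed

lemma meq:
  fixes A B X :: "'a::euclidean_space set"
  assumes "A \<subseteq> B" "A \<in> sets lebesgue" "B - A \<in> null_sets lebesgue" "X \<in> sets lebesgue"
  shows "emeasure lebesgue (X \<inter> B) = emeasure lebesgue (X \<inter> A)"
    and "measure lebesgue (X \<inter> B) = measure lebesgue (X \<inter> A)"
proof -
  have eq: "X \<inter> B = (X \<inter> A) \<union> (X \<inter> (B - A))" using assms(1) by auto
  have n: "X \<inter> (B - A) \<in> null_sets lebesgue"
    using assms by (intro null_sets_completion_subset[OF _ assms(3)]) auto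
  have m: "X \<inter> A \<in> sets lebesgue" using assms by auto
  show "emeasure lebesgue (X \<inter> B) = emeasure lebesgue (X \<inter> A)"
    unfolding eq by (rule emeasure_Un_null_set[OF m n])
  show "measure lebesgue (X \<inter> B) = measure lebesgue (X \<inter> A)"
    unfolding eq by (rule measure_Un_null_set[OF m n])
qed

lemma avg:
  fixes T0 :: "'a::euclidean_space set" and f :: "'a \<Rightarrow> real"
  assumes "T0 \<in> sets borel" "emeasure lborel T0 \<noteq> \<infinity>" "\<And>x. x \<in> T0 \<Longrightarrow> c \<le> f x" "c \<ge> 0"
    "(\<integral>\<^sup>+x. indicator T0 x * ennreal (f x) \<partial>lborel) \<le> ennreal B" "B \<ge> 0"
  shows "c * measure lborel T0 \<le> B"
proof -
  have "ennreal (c * measure lborel T0) = ennreal c * emeasure lborel T0"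
    using assms(2,4) by (simp add: emeasure_eq_ennreal_measure ennreal_mult)
  also have "\<dots> = (\<integral>\<^sup>+x. ennreal c * indicator T0 x \<partial>lborel)"
    using assms(1) by (subst nn_integral_cmult_indicator) auto
  also have "\<dots> \<le> (\<integral>\<^sup>+x. indicator T0 x * ennreal (f x) \<partial>lborel)"
    using assms(3) by (intro nn_integral_mono) (auto simp: indicator_def intro: ennreal_leI)
  also have "\<dots> \<le> ennreal B" by fact
  finally show ?thesis using assms(6) by (simp add: ennreal_le_iff)
qed


lemma fub_real:
  fixes F T0 L :: "'a::euclidean_space set"
  assumes F: "F \<in> sets borel" and T0: "T0 \<in> sets borel" and L: "L \<in> sets borel" and d: "d \<ge> 0"
  and sub: "\<And>x. x \<in> T0 \<Longrightarrow> cube d x \<subseteq> L"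
  and Lf: "emeasure lborel L \<noteq> \<infinity>" and Tf: "emeasure lborel T0 \<noteq> \<infinity>"
  and c: "\<And>x. x \<in> T0 \<Longrightarrow> c \<le> measure lborel (cube d x \<inter> F)" "c \<ge> 0"
  shows "c * measure lborel T0 \<le> d ^ DIM('a) * measure lborel (L \<inter> F)"
proof (rule avg[OF T0 Tf c])
  have cf: "emeasure lborel (cube d x \<inter> F) = ennreal (measure lborel (cube d x \<inter> F))" for x
  proof (rule emeasure_eq_ennreal_measure)
    have "emeasure lborel (cube d x \<inter> F) \<le> emeasure lborel (cube d x)"
      using F by (intro emeasure_mono) (auto simp: cube_def)
    also have "\<dots> < \<infinity>" by (simp add: cube_def emeasure_lborel_cbox_eq)
    finally show "emeasure lborel (cube d x \<inter> F) \<noteq> top" by simp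
  qed
  have lf: "emeasure lborel (L \<inter> F) = ennreal (measure lborel (L \<inter> F))"
  proof (rule emeasure_eq_ennreal_measure)
    have "emeasure lborel (L \<inter> F) \<le> emeasure lborel L"
      using L by (intro emeasure_mono) auto
    also have "\<dots> < \<infinity>" using Lf by (simp add: less_top)
    finally show "emeasure lborel (L \<inter> F) \<noteq> top" by simp
  qed
  show "(\<integral>\<^sup>+x. indicator T0 x * ennreal (measure lborel (cube d x \<inter> F)) \<partial>lborel)
      \<le> ennreal (d ^ DIM('a) * measure lborel (L \<inter> F))"
    using fub[OF F T0 L d sub] d by (simp add: cf lf ennreal_mult)
  show "0 \<le> d ^ DIM('a) * measure lborel (L \<inter> F)" using d by simp
qed


lemma main:
  fixes \<Lambda> E :: "'a::euclidean_space set"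
  assumes \<alpha>: "0 < \<alpha>" "\<alpha> < 1" and \<epsilon>: "0 < \<epsilon>" "\<epsilon> < min \<alpha> (1 - \<alpha>)"
  and cvx: "convex \<Lambda>" and Q: "unit_cube \<subseteq> \<Lambda>" and bd: "bounded \<Lambda>"
  and E: "E \<in> sets lebesgue" and avgE: "measure lebesgue (\<Lambda> \<inter> E) / measure lebesgue \<Lambda> = \<alpha>"
  shows "\<exists>R. axis_cube R \<and> R \<subseteq> \<Lambda> \<and> measure lebesgue R = (\<epsilon> / (2 * DIM('a))) ^ DIM('a) \<and>
     (\<alpha> - \<epsilon>) / (1 - \<epsilon>) \<le> measure lebesgue (R \<inter> E) / measure lebesgue R \<and>
     measure lebesgue (R \<inter> E) / measure lebesgue R \<le> \<alpha> / (1 - \<epsilon>)"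
proof -
  define n where "n = DIM('a)"
  define d where "d = \<epsilon> / (2 * n)"
  have n1: "n \<ge> 1" unfolding n_def using DIM_positive[where 'a='a] by linarith
  have d0: "0 < d" using \<epsilon> n1 by (simp add: d_def)
  have d1: "d < 1"
  proof -
    have "d \<le> \<epsilon> / 2" unfolding d_def using \<epsilon> n1 by (intro divide_left_mono) auto
    then show ?thesis using \<epsilon> by auto
  qed
  have nd: "n * d = \<epsilon> / 2" unfolding d_def using n1 by simp
  define dn where "dn = d ^ n"
  have dn0: "dn > 0" using d0 by (simp add: dn_def)
  have \<Lambda>l: "\<Lambda> \<in> lmeasurable" by (rule measurable_convex[OF cvx bd])
  have \<Lambda>s: "\<Lambda> \<in> sets lebesgue" using \<Lambda>l by auto
  define M where "M = measure lebesgue \<Lambda>"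
  have uc: "measure lebesgue (unit_cube :: 'a set) = 1"
    by (simp add: unit_cube_def measure_lborel_cbox_eq)
  have M1: "M \<ge> 1"
    unfolding M_def uc[symmetric] using Q \<Lambda>l by (intro measure_mono_fmeasurable) (auto simp: unit_cube_def)
  have ME: "measure lebesgue (\<Lambda> \<inter> E) = \<alpha> * M"
    using avgE M1 unfolding M_def by (simp add: field_simps)
  obtain S where S: "S \<in> sets borel" "S \<subseteq> E" "E - S \<in> null_sets lebesgue"
    using borel_inner[OF E] by metis
  have Sl: "S \<in> sets lebesgue" using S by auto
  have mSE: "measure lebesgue (X \<inter> E) = measure lebesgue (X \<inter> S)" if "X \<in> sets lebesgue" for X
    using meq(2)[OF S(2) Sl S(3) that] .
  obtain L where L: "L \<in> sets borel" "\<Lambda> \<subseteq> L" "L - \<Lambda> \<in> null_sets lebesgue"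
    using borel_outer[OF \<Lambda>s] by metis
  have mL: "measure lebesgue (X \<inter> L) = measure lebesgue (X \<inter> \<Lambda>)" if "X \<in> sets lebesgue" for X
    using meq(2)[OF L(2) \<Lambda>s L(3) that] .
  have emL: "emeasure lebesgue (X \<inter> L) = emeasure lebesgue (X \<inter> \<Lambda>)" if "X \<in> sets lebesgue" for X
    using meq(1)[OF L(2) \<Lambda>s L(3) that] .
  have Lf: "emeasure lborel L \<noteq> \<infinity>"
  proof -
    have "emeasure lborel L = emeasure lebesgue (UNIV \<inter> L)" using L by simp
    also have "\<dots> = emeasure lebesgue \<Lambda>" using emL[of UNIV] by simp
    finally show ?thesis using fmeasurableD2[OF \<Lambda>l] by (simp only: infinity_ennreal_def) simp
  qed
  define T where "T = (\<lambda>x. (1 - d) *\<^sub>R x) ` \<Lambda>"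
  have Tc: "convex T" unfolding T_def by (rule convex_scaling[OF cvx])
  have Tb: "bounded T" unfolding T_def by (rule bounded_scaling[OF bd])
  have Tl: "T \<in> lmeasurable" by (rule measurable_convex[OF Tc Tb])
  have Ts: "T \<in> sets lebesgue" using Tl by auto
  have mT: "measure lebesgue T = (1 - d) ^ n * M"
  proof -
    have "T = (\<lambda>x. (1 - d) *\<^sub>R x + 0) ` \<Lambda>" unfolding T_def by simp
    then show ?thesis using measure_lebesgue_affine[of "1 - d" 0 \<Lambda>] d1
      by (simp add: M_def n_def)
  qed
  have bern: "1 - \<epsilon> / 2 \<le> (1 - d) ^ n"
    using Bernoulli_inequality[of "- d" n] d1 nd by simp
  obtain T0 where T0: "T0 \<in> sets borel" "T0 \<subseteq> T" "T - T0 \<in> null_sets lebesgue"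
    using borel_inner[OF Ts] by metis
  have T0l: "T0 \<in> sets lebesgue" using T0 by auto
  have mT0: "measure lborel T0 = measure lebesgue T"
    using meq(2)[OF T0(2) T0l T0(3), of UNIV] T0 by simp
  have T0f: "emeasure lborel T0 \<noteq> \<infinity>"
  proof -
    have "emeasure lborel T0 = emeasure lebesgue (UNIV \<inter> T0)" using T0 by simp
    also have "\<dots> = emeasure lebesgue T" using meq(1)[OF T0(2) T0l T0(3), of UNIV] by simp
    finally show ?thesis using fmeasurableD2[OF Tl] by (simp only: infinity_ennreal_def) simp
  qed
  have tbig: "measure lborel T0 \<ge> (1 - \<epsilon> / 2) * M"
    using mT0 mT bern M1 by (simp add: mult_right_mono)
  have cubeT: "cube d x \<subseteq> \<Lambda>" if "x \<in> T" for x
  proof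
    fix y assume y: "y \<in> cube d x"
    obtain z where z: "z \<in> \<Lambda>" "x = (1 - d) *\<^sub>R z" using \<open>x \<in> T\<close> unfolding T_def by auto
    define q where "q = (1 / d) *\<^sub>R (y - x)"
    have "q \<in> unit_cube" using y d0
      by (auto simp: q_def unit_cube_def cube_def mem_box inner_simps field_simps)
    then have q: "q \<in> \<Lambda>" using Q by auto
    have "y = (1 - d) *\<^sub>R z + d *\<^sub>R q" using d0 z by (simp add: q_def)
    then show "y \<in> \<Lambda>" using convexD[OF cvx z(1) q, of "1 - d" d] d1 d0 by simp
  qed
  have cubeL: "cube d x \<subseteq> L" if "x \<in> T0" for x using cubeT that T0(2) L(2) by blast
  define \<phi> where "\<phi> x = measure lebesgue (cube d x \<inter> E)" for x
  have cs: "cube d x \<in> sets borel" for x :: 'a by (simp add: cube_def)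
  have phiS: "\<phi> x = measure lborel (cube d x \<inter> S)" for x
    unfolding \<phi>_def using mSE[of "cube d x"] cs S by simp
  have phiC: "measure lborel (cube d x \<inter> - S) = dn - \<phi> x" for x
  proof -
    have "cube d x \<inter> - S = cube d x - (cube d x \<inter> S)" by auto
    then have "measure lborel (cube d x \<inter> - S) = measure lborel (cube d x) - measure lborel (cube d x \<inter> S)"
      using cs S by (simp add: measure_Diff cube_def emeasure_lborel_cbox_eq sets.Int)
    also have "measure lborel (cube d x) = dn"
      using cube_measure[of d x] d0 cs by (simp add: dn_def n_def)
    finally show ?thesis by (simp add: phiS)
  qed
  have LS: "measure lborel (L \<inter> S) = \<alpha> * M"
  proof -
    have "measure lborel (L \<inter> S) = measure lebesgue (S \<inter> L)" using L S by (simp add: Int_commute)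
    also have "\<dots> = measure lebesgue (S \<inter> \<Lambda>)" using mL[OF Sl] .
    also have "\<dots> = measure lebesgue (\<Lambda> \<inter> E)" using mSE[OF \<Lambda>s] by (simp add: Int_commute)
    finally show ?thesis using ME by simp
  qed
  have LC: "measure lborel (L \<inter> - S) = (1 - \<alpha>) * M"
  proof -
    have eq: "L \<inter> - S = L - (L \<inter> S)" by auto
    have "measure lborel L = M" using mL[of UNIV] L unfolding M_def by simp
    then have "measure lborel (L \<inter> - S) = M - \<alpha> * M"
      unfolding eq using L S Lf LS by (simp add: measure_Diff sets.Int)
    then show ?thesis by (simp add: algebra_simps)
  qed
  define lo where "lo = (\<alpha> - \<epsilon>) / (1 - \<epsilon>)"
  define hi where "hi = \<alpha> / (1 - \<epsilon>)"
  have e1: "1 - \<epsilon> > 0" using \<epsilon> by auto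
  have lohi: "lo \<le> hi" unfolding lo_def hi_def using e1 \<epsilon> by (simp add: divide_right_mono)
  have x2: "\<exists>x\<in>T0. \<phi> x \<le> hi * dn"
  proof (rule ccontr)
    assume "\<not> ?thesis"
    then have "\<And>x. x \<in> T0 \<Longrightarrow> hi * dn \<le> measure lborel (cube d x \<inter> S)" by (auto simp: phiS)
    from fub_real[OF S(1) T0(1) L(1) _ cubeL Lf T0f this] d0 dn0 \<alpha> e1
    have "hi * dn * measure lborel T0 \<le> dn * (\<alpha> * M)"
      by (simp add: LS dn_def n_def hi_def)
    then have "hi * measure lborel T0 \<le> \<alpha> * M" using dn0 by (simp add: mult.assoc)
    then have "\<alpha> * measure lborel T0 \<le> \<alpha> * ((1 - \<epsilon>) * M)" using e1 by (simp add: hi_def field_simps)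
    then have "measure lborel T0 \<le> (1 - \<epsilon>) * M" using \<alpha> by simp
    moreover have "0 < \<epsilon> * M" using \<epsilon> M1 by simp
    ultimately show False using tbig by (simp add: algebra_simps)
  qed
  have x1: "\<exists>x\<in>T0. lo * dn \<le> \<phi> x"
  proof (rule ccontr)
    assume "\<not> ?thesis"
    then have hyp: "\<And>x. x \<in> T0 \<Longrightarrow> (1 - lo) * dn \<le> measure lborel (cube d x \<inter> - S)"
      by (auto simp: phiC algebra_simps)
    have Sc: "- S \<in> sets borel" using S by auto
    have lo1: "1 - lo = (1 - \<alpha>) / (1 - \<epsilon>)" using e1 by (simp add: lo_def field_simps)
    have c0: "(1 - lo) * dn \<ge> 0" using \<alpha> e1 dn0 lo1 by simp
    have "(1 - lo) * dn * measure lborel T0 \<le> d ^ DIM('a) * measure lborel (L \<inter> - S)"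
      using fub_real[OF Sc T0(1) L(1) _ cubeL Lf T0f hyp c0] d0 by simp
    then have "(1 - lo) * dn * measure lborel T0 \<le> dn * ((1 - \<alpha>) * M)"
      by (simp add: LC dn_def n_def)
    then have "(1 - lo) * measure lborel T0 \<le> (1 - \<alpha>) * M" using dn0 by (simp add: mult.assoc)
    then have "(1 - \<alpha>) * measure lborel T0 \<le> (1 - \<alpha>) * ((1 - \<epsilon>) * M)"
      using e1 lo1 by (simp add: field_simps)
    then have "measure lborel T0 \<le> (1 - \<epsilon>) * M" using \<alpha> by simp
    moreover have "0 < \<epsilon> * M" using \<epsilon> M1 by simp
    ultimately show False using tbig by (simp add: algebra_simps)
  qed
  have "\<exists>p\<in>T. lo * dn \<le> \<phi> p \<and> \<phi> p \<le> hi * dn"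
  proof -
    obtain x1 where x1': "x1 \<in> T" "lo * dn \<le> \<phi> x1" using x1 T0(2) by blast
    obtain x2 where x2': "x2 \<in> T" "\<phi> x2 \<le> hi * dn" using x2 T0(2) by blast
    show ?thesis
    proof (cases "lo * dn \<le> \<phi> x2")
      case True then show ?thesis using x2' by blast
    next
      case c2: False
      show ?thesis
      proof (cases "\<phi> x1 \<le> hi * dn")
        case True then show ?thesis using x1' by blast
      next
        case c1: False
        define h where "h t = \<phi> (x2 + t *\<^sub>R (x1 - x2))" for t :: real
        have ch: "continuous_on {0..1} h" unfolding h_def \<phi>_def
          by (rule continuous_on_compose2[OF cube_cont[OF _ E], where f = "\<lambda>t. x2 + t *\<^sub>R (x1 - x2)"])
             (use d0 in \<open>auto intro!: continuous_intros\<close>)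
        have "h 0 \<le> lo * dn" "lo * dn \<le> h 1" using c1 c2 lohi dn0 unfolding h_def
          by (auto intro: order_trans[OF _ mult_right_mono[OF lohi]])
        then obtain t where t: "0 \<le> t" "t \<le> 1" "h t = lo * dn"
          using IVT'[of h 0 "lo * dn" 1, OF _ _ _ ch] by auto
        have "x2 + t *\<^sub>R (x1 - x2) = (1 - t) *\<^sub>R x2 + t *\<^sub>R x1" by (simp add: algebra_simps)
        also have "\<dots> \<in> T" using convexD[OF Tc x2'(1) x1'(1), of "1 - t" t] t by simp
        finally show ?thesis using t lohi dn0 unfolding h_def
          by (intro bexI[of _ "x2 + t *\<^sub>R (x1 - x2)"]) (auto intro: mult_right_mono)
      qed
    qed
  qed
  then obtain p where p: "p \<in> T" "lo * dn \<le> \<phi> p" "\<phi> p \<le> hi * dn" by blast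
  have mR: "measure lebesgue (cube d p) = dn" using cube_measure[of d p] d0 by (simp add: dn_def n_def)
  show ?thesis
  proof (intro exI conjI)
    show "axis_cube (cube d p)" unfolding axis_cube_def cube_def using d0 by blast
    show "cube d p \<subseteq> \<Lambda>" using cubeT[OF p(1)] .
    show "measure lebesgue (cube d p) = (\<epsilon> / (2 * DIM('a))) ^ DIM('a)"
      using mR by (simp add: dn_def d_def n_def)
    show "(\<alpha> - \<epsilon>) / (1 - \<epsilon>) \<le> measure lebesgue (cube d p \<inter> E) / measure lebesgue (cube d p)"
      using p(2) dn0 unfolding mR \<phi>_def lo_def[symmetric] by (simp add: pos_le_divide_eq)
    show "measure lebesgue (cube d p \<inter> E) / measure lebesgue (cube d p) \<le> \<alpha> / (1 - \<epsilon>)"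
      using p(3) dn0 unfolding mR \<phi>_def hi_def[symmetric] by (simp add: pos_divide_le_eq)
  qed
qed


theorem lemma3:
  "\<exists>a A::real. 0 < a \<and> a \<le> A \<and>
    (\<forall>(\<alpha>::real) (\<epsilon>::real) (\<Lambda>::'a::euclidean_space set) (E::'a set).
       0 < \<alpha> \<and> \<alpha> < 1 \<and> 0 < \<epsilon> \<and> \<epsilon> < min \<alpha> (1 - \<alpha>) \<and>
       convex \<Lambda> \<and> unit_cube \<subseteq> \<Lambda> \<and>
       \<Lambda> \<subseteq> dilate (real DIM('a) powr (3/2)) unit_cube_center unit_cube \<and>
       E \<in> sets lebesgue \<and> emeasure lebesgue E < \<infinity> \<and>
       measure lebesgue (\<Lambda> \<inter> E) / measure lebesgue \<Lambda> = \<alpha>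
     \<longrightarrow> (\<exists>R. axis_cube R \<and> R \<subseteq> \<Lambda> \<and>
            a * \<epsilon> ^ DIM('a) \<le> measure lebesgue R \<and>
            measure lebesgue R \<le> A * \<epsilon> ^ DIM('a) \<and>
            (\<alpha> - \<epsilon>) / (1 - \<epsilon>) \<le> measure lebesgue (R \<inter> E) / measure lebesgue R \<and>
            measure lebesgue (R \<inter> E) / measure lebesgue R \<le> \<alpha> / (1 - \<epsilon>)))"
proof (rule exI[of _ "1 / (2 * real DIM('a)) ^ DIM('a)"], rule exI[of _ "1 / (2 * real DIM('a)) ^ DIM('a)"], intro conjI allI impI)
  let ?a = "1 / (2 * real DIM('a)) ^ DIM('a)"
  show "0 < ?a" by simp
  show "?a \<le> ?a" by simp
  fix \<alpha> \<epsilon> :: real and \<Lambda> E :: "'a set"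
  assume H: "0 < \<alpha> \<and> \<alpha> < 1 \<and> 0 < \<epsilon> \<and> \<epsilon> < min \<alpha> (1 - \<alpha>) \<and>
       convex \<Lambda> \<and> unit_cube \<subseteq> \<Lambda> \<and>
       \<Lambda> \<subseteq> dilate (real DIM('a) powr (3/2)) unit_cube_center unit_cube \<and>
       E \<in> sets lebesgue \<and> emeasure lebesgue E < \<infinity> \<and>
       measure lebesgue (\<Lambda> \<inter> E) / measure lebesgue \<Lambda> = \<alpha>"
  have "compact (dilate (real DIM('a) powr (3/2)) unit_cube_center (unit_cube :: 'a set))"
    unfolding dilate_def unit_cube_def
    by (intro compact_continuous_image continuous_intros) auto
  then have bd: "bounded \<Lambda>" using H by (blast intro: bounded_subset compact_imp_bounded)
  obtain R where R: "axis_cube R" "R \<subseteq> \<Lambda>" "measure lebesgue R = (\<epsilon> / (2 * DIM('a))) ^ DIM('a)"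
     "(\<alpha> - \<epsilon>) / (1 - \<epsilon>) \<le> measure lebesgue (R \<inter> E) / measure lebesgue R"
     "measure lebesgue (R \<inter> E) / measure lebesgue R \<le> \<alpha> / (1 - \<epsilon>)"
    using main[of \<alpha> \<epsilon> \<Lambda> E] H bd by blast
  have eq: "measure lebesgue R = ?a * \<epsilon> ^ DIM('a)" using R(3) by (simp add: power_divide)
  show "\<exists>R. axis_cube R \<and> R \<subseteq> \<Lambda> \<and>
            ?a * \<epsilon> ^ DIM('a) \<le> measure lebesgue R \<and>
            measure lebesgue R \<le> ?a * \<epsilon> ^ DIM('a) \<and>
            (\<alpha> - \<epsilon>) / (1 - \<epsilon>) \<le> measure lebesgue (R \<inter> E) / measure lebesgue R \<and>
            measure lebesgue (R \<inter> E) / measure lebesgue R \<le> \<alpha> / (1 - \<epsilon>)"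
    using R eq by auto
qed

end
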